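(* Let $n=2m$ with $m$ a positive integer, and let $\mathbf{x}_n=(1,\dots,1)\in\mathbb{R}^n$. Then $$E(\mathbf{x}_n)\le m(1+\ln m),$$ where $E$ is as defined in the context.
   Context: For $\mathbf{x}=(x_1,\dots,x_n)\in(0,\infty)^n$, let $\mathcal{C}(\mathbf{x})$ be the configuration of $n+1$ points $P_1<\dots<P_{n+1}$ on $\mathbb{R}$ with $P_1=0$ and $P_{i+1}=P_i+x_i$, where $P_i$ is red if $i$ is odd and blue if $i$ is even. A matching $\mathcal{M}$ of this configuration is produced by the algorithm which repeatedly selects, among all pairs consisting of an unmatched blue point and an unmatched red point, a pair at minimum distance and matches them, until no further matching is possible; ties are broken at random. $D(\mathbf{x})$ is the expected value of $\sum_{P\text{ blue}}|P-\mathcal{M}(P)|$ with respect to the randomness of the algorithm. For a permutation $\pi$ of $\{1,\dots,n\}$ write $\pi(\mathbf{x})=(x_{\pi(1)},\dots,x_{\pi(n)})$, and $E(\mathbf{x})=\frac{1}{n!}\sum_\pi D(\pi(\mathbf{x}))$. *)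

theory Defs
  imports "HOL-Combinatorics.Permutations" Complex_Main
begin

text \<open>Position of point P_i (i = 1..n+1): P_1 = 0, P_(i+1) = P_i + x_i.
  The vector x is a function indexed by 1..n.\<close>
definition pos :: "(nat \<Rightarrow> real) \<Rightarrow> nat \<Rightarrow> real" where
  "pos x i = (\<Sum>j\<in>{1..<i}. x j)"

text \<open>Expected cost of the random greedy matching, starting from the sets B of
  unmatched blue indices and R of unmatched red indices, with point positions P.
  At each step a pair at minimum distance is chosen uniformly at random among all
  minimum-distance pairs. The first argument is fuel (each step removes one blue point).\<close>
primrec greedy_exp :: "(nat \<Rightarrow> real) \<Rightarrow> nat \<Rightarrow> nat set \<Rightarrow> nat set \<Rightarrow> real" where
  "greedy_exp P 0 B R = 0"
| "greedy_exp P (Suc k) B R =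
     (if B = {} \<or> R = {} then 0
      else (let d = Min {\<bar>P b - P r\<bar> | b r. b \<in> B \<and> r \<in> R};
                T = {(b, r). b \<in> B \<and> r \<in> R \<and> \<bar>P b - P r\<bar> = d}
            in (\<Sum>(b, r)\<in>T. d + greedy_exp P k (B - {b}) (R - {r})) / real (card T)))"

text \<open>D(x) for x = (x_1,...,x_n): points P_1..P_(n+1), red if index odd, blue if even.\<close>
definition Dcost :: "nat \<Rightarrow> (nat \<Rightarrow> real) \<Rightarrow> real" where
  "Dcost n x = greedy_exp (pos x) (Suc n) {i \<in> {1..Suc n}. even i} {i \<in> {1..Suc n}. odd i}"

definition Ecost :: "nat \<Rightarrow> (nat \<Rightarrow> real) \<Rightarrow> real" where
  "Ecost n x = (\<Sum>p \<in> {p. p permutes {1..n}}. Dcost n (x \<circ> p)) / fact n"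

end

theory Submission
  imports Defs "HOL-Analysis.Harmonic_Numbers"
begin

definition ff :: "nat set \<Rightarrow> nat set \<Rightarrow> nat \<Rightarrow> int" where
  "ff B R i = (if i \<in> R then 1 else 0) - (if i \<in> B then 1 else 0)"

definition cc :: "nat set \<Rightarrow> nat set \<Rightarrow> nat \<Rightarrow> int" where
  "cc B R t = (\<Sum>i\<in>{..t}. ff B R i)"

definition Inv :: "nat \<Rightarrow> nat set \<Rightarrow> nat set \<Rightarrow> bool" where
  "Inv m B R \<longleftrightarrow> B \<subseteq> {1..2*m+1} \<and> R \<subseteq> {1..2*m+1} \<and> B \<inter> R = {} \<and>
     (\<forall>t. cc B R t \<in> {0,1}) \<and> cc B R (2*m+1) = 1"

lemma sum_pos_ex:
  fixes g :: "nat \<Rightarrow> int"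
  assumes "finite A" "0 < sum g A" shows "\<exists>i\<in>A. 0 < g i"
proof (rule ccontr)
  assume "\<not> ?thesis"
  then have "sum g A \<le> 0" by (intro sum_nonpos) auto
  with assms show False by simp
qed

lemma ff_pos: "0 < ff B R i \<Longrightarrow> i \<in> R"
  by (simp add: ff_def split: if_splits)

lemma ff_zero: "i \<notin> B \<Longrightarrow> i \<notin> R \<Longrightarrow> ff B R i = 0"
  by (simp add: ff_def)

lemma cc_Suc: "cc B R (Suc t) = cc B R t + ff B R (Suc t)"
  by (simp add: cc_def)

lemma cc_split: "s \<le> t \<Longrightarrow> cc B R t = cc B R s + (\<Sum>i\<in>{s<..t}. ff B R i)"
proof (induction t rule: dec_induct)
  case base then show ?case by simp
next
  case (step t)
  have "{s<..Suc t} = insert (Suc t) {s<..t}" using step by auto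
  then show ?case using step by (simp add: cc_Suc)
qed

lemma cc_pred: "1 \<le> t \<Longrightarrow> cc B R t = cc B R (t - 1) + ff B R t"
  using cc_Suc[of B R "t-1"] by simp

lemma blue_facts:
  assumes I: "Inv m B R" and b: "b \<in> B"
  shows "cc B R b = 0" "cc B R (b - 1) = 1" "\<exists>r\<in>R. r < b" "\<exists>r\<in>R. b < r \<and> r \<le> 2*m+1"
proof -
  have b1: "1 \<le> b" "b \<le> 2*m+1" using I b by (auto simp: Inv_def)
  have fb: "ff B R b = -1" using I b by (auto simp: Inv_def ff_def)
  have "cc B R b \<in> {0,1}" "cc B R (b-1) \<in> {0,1}" using I by (auto simp: Inv_def)
  moreover have "cc B R b = cc B R (b-1) - 1" using cc_pred[OF b1(1)] fb by simp
  ultimately show c0: "cc B R b = 0" and c1: "cc B R (b - 1) = 1" by auto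
  have "0 < (\<Sum>i\<in>{..b-1}. ff B R i)" using c1 by (simp add: cc_def)
  then obtain i where "i \<in> {..b-1}" "0 < ff B R i" using sum_pos_ex by blast
  then show "\<exists>r\<in>R. r < b" using b1 ff_pos by (intro bexI[of _ i]) auto
  have "cc B R (2*m+1) = cc B R b + (\<Sum>i\<in>{b<..2*m+1}. ff B R i)"
    using cc_split b1 by blast
  then have "0 < (\<Sum>i\<in>{b<..2*m+1}. ff B R i)" using I c0 by (simp add: Inv_def)
  then obtain i where "i \<in> {b<..2*m+1}" "0 < ff B R i" using sum_pos_ex by blast
  then show "\<exists>r\<in>R. b < r \<and> r \<le> 2*m+1" using ff_pos by (intro bexI[of _ i]) auto
qed

lemma blue_between:
  assumes I: "Inv m B R" and b: "b \<in> B" "b' \<in> B" "b < b'"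
  shows "\<exists>r\<in>R. b < r \<and> r < b'"
proof -
  have "cc B R (b' - 1) = cc B R b + (\<Sum>i\<in>{b<..b'-1}. ff B R i)"
    using cc_split b by (metis Suc_pred' less_Suc_eq_le less_zeroE not_gr_zero)
  then have "0 < (\<Sum>i\<in>{b<..b'-1}. ff B R i)" using blue_facts[OF I] b by simp
  then obtain i where "i \<in> {b<..b'-1}" "0 < ff B R i" using sum_pos_ex by blast
  then show ?thesis using ff_pos b by (intro bexI[of _ i]) auto
qed

lemma red_cc:
  assumes I: "Inv m B R" and r: "r \<in> R"
  shows "cc B R r = 1"
proof -
  have r1: "1 \<le> r" using I r by (auto simp: Inv_def)
  have fr: "ff B R r = 1" using I r by (auto simp: Inv_def ff_def)
  have "cc B R r \<in> {0,1}" "cc B R (r-1) \<in> {0,1}" using I by (auto simp: Inv_def)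
  moreover have "cc B R r = cc B R (r-1) + 1" using cc_pred[OF r1] fr by simp
  ultimately show ?thesis by auto
qed


lemma card_bound:
  assumes I: "Inv m B R" and dd: "\<And>b r. b \<in> B \<Longrightarrow> r \<in> R \<Longrightarrow> real dd \<le> \<bar>real b - real r\<bar>"
  shows "card B * dd \<le> m"
proof -
  define Nb where "Nb b = {b - dd ..< b + dd}" for b
  have fin: "finite B" using I finite_subset by (auto simp: Inv_def)
  have lr: "dd + 1 \<le> b \<and> b + dd \<le> 2*m+1" if b: "b \<in> B" for b
  proof -
    obtain r where r: "r \<in> R" "r < b" using blue_facts(3)[OF I b] by blast
    obtain r' where r': "r' \<in> R" "b < r'" "r' \<le> 2*m+1" using blue_facts(4)[OF I b] by blast
    have "1 \<le> r" using I r by (auto simp: Inv_def)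
    moreover have "real dd \<le> \<bar>real b - real r\<bar>" "real dd \<le> \<bar>real b - real r'\<bar>"
      using dd[OF b r(1)] dd[OF b r'(1)] by auto
    ultimately show ?thesis using r r' by linarith
  qed
  have cardN: "card (Nb b) = 2 * dd" if "b \<in> B" for b
    using lr[OF that] by (simp add: Nb_def)
  have sub: "(\<Union>b\<in>B. Nb b) \<subseteq> {1..<2*m+1}"
    using lr by (force simp: Nb_def)
  have disj: "Nb b \<inter> Nb b' = {}" if bb: "b \<in> B" "b' \<in> B" "b < b'" for b b'
  proof -
    obtain r where r: "r \<in> R" "b < r" "r < b'" using blue_between[OF I bb] by blast
    have "real dd \<le> \<bar>real b - real r\<bar>" "real dd \<le> \<bar>real b' - real r\<bar>"
      using dd[OF bb(1) r(1)] dd[OF bb(2) r(1)] by auto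
    then have "b + dd \<le> b' - dd" using r by linarith
    then show ?thesis by (auto simp: Nb_def)
  qed
  have "card (\<Union>b\<in>B. Nb b) = (\<Sum>b\<in>B. card (Nb b))"
  proof (rule card_UN_disjoint[OF fin])
    show "\<forall>i\<in>B. finite (Nb i)" by (simp add: Nb_def)
    show "\<forall>i\<in>B. \<forall>j\<in>B. i \<noteq> j \<longrightarrow> Nb i \<inter> Nb j = {}"
      using disj by (metis inf_commute linorder_neqE_nat)
  qed
  also have "\<dots> = card B * (2 * dd)" using cardN by simp
  finally have "card B * (2 * dd) \<le> card {1..<2*m+1}"
    by (metis card_mono finite_atLeastLessThan sub)
  then show ?thesis by simp
qed

lemma ff_remove:
  assumes "b0 \<in> B" "r0 \<in> R" "B \<inter> R = {}"
  shows "ff (B - {b0}) (R - {r0}) i = ff B R i - (if i = r0 then 1 else 0) + (if i = b0 then 1 else 0)"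
  using assms by (auto simp: ff_def)

lemma cc_remove:
  assumes "b0 \<in> B" "r0 \<in> R" "B \<inter> R = {}"
  shows "cc (B - {b0}) (R - {r0}) t = cc B R t - (if r0 \<le> t then 1 else 0) + (if b0 \<le> t then 1 else 0)"
  unfolding cc_def ff_remove[OF assms] by (simp add: sum.distrib sum_subtractf)

lemma cc_const:
  assumes "s \<le> t" "\<And>i. s < i \<Longrightarrow> i \<le> t \<Longrightarrow> i \<notin> B \<and> i \<notin> R"
  shows "cc B R t = cc B R s"
proof -
  have "(\<Sum>i\<in>{s<..t}. ff B R i) = 0" using assms(2) by (intro sum.neutral) (auto simp: ff_def)
  then show ?thesis using cc_split[OF assms(1)] by simp
qed

lemma preserve:
  assumes I: "Inv m B R" and b0: "b0 \<in> B" and r0: "r0 \<in> R"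
    and mn: "\<And>b r. b \<in> B \<Longrightarrow> r \<in> R \<Longrightarrow> \<bar>real b0 - real r0\<bar> \<le> \<bar>real b - real r\<bar>"
  shows "Inv m (B - {b0}) (R - {r0})"
proof -
  have dj: "B \<inter> R = {}" using I by (simp add: Inv_def)
  have nb: "q \<notin> B \<and> q \<notin> R" if "min b0 r0 < q" "q < max b0 r0" for q
  proof
    show "q \<notin> B" using mn[OF _ r0, of q] that by (auto simp: min_def max_def split: if_splits)
    show "q \<notin> R" using mn[OF b0, of q] that by (auto simp: min_def max_def split: if_splits)
  qed
  have r01: "1 \<le> r0" "r0 \<le> 2*m+1" "1 \<le> b0" "b0 \<le> 2*m+1" using I b0 r0 by (auto simp: Inv_def)
  have "cc (B - {b0}) (R - {r0}) t \<in> {0,1}" for t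
  proof -
    have ct: "cc B R t \<in> {0,1}" using I by (simp add: Inv_def)
    consider "t < b0" "t < r0" | "b0 \<le> t" "r0 \<le> t" | "b0 \<le> t" "t < r0" | "r0 \<le> t" "t < b0"
      by linarith
    then show ?thesis
    proof cases
      case 3
      have "cc B R t = cc B R b0" using nb 3 by (intro cc_const) auto
      then show ?thesis using 3 cc_remove[OF b0 r0 dj, of t] blue_facts(1)[OF I b0] by simp
    next
      case 4
      have "cc B R t = cc B R r0" using nb 4 by (intro cc_const) auto
      then show ?thesis using 4 cc_remove[OF b0 r0 dj, of t] red_cc[OF I r0] by simp
    qed (use ct cc_remove[OF b0 r0 dj, of t] in auto)
  qed
  moreover have "cc (B - {b0}) (R - {r0}) (2*m+1) = 1"
    using cc_remove[OF b0 r0 dj, of "2*m+1"] r01 I by (simp add: Inv_def)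
  ultimately show ?thesis using I by (auto simp: Inv_def)
qed


lemma main:
  assumes P: "\<And>i. 1 \<le> i \<Longrightarrow> P i = real i - 1"
  shows "Inv m B R \<Longrightarrow> greedy_exp P k B R \<le> real m * harm (card B)"
proof (induction k arbitrary: B R)
  case 0
  then show ?case by (simp add: harm_nonneg)
next
  case (Suc k)
  note I = Suc.prems
  show ?case
  proof (cases "B = {} \<or> R = {}")
    case True
    then show ?thesis by (simp add: harm_nonneg)
  next
    case False
    have finB: "finite B" and finR: "finite R" using I finite_subset by (auto simp: Inv_def)
    have Pd: "\<bar>P b - P r\<bar> = \<bar>real b - real r\<bar>" if "b \<in> B" "r \<in> R" for b r
    proof -
      have "1 \<le> b" "1 \<le> r" using I that by (auto simp: Inv_def)
      then show ?thesis using P[of b] P[of r] by simp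
    qed
    define S where "S = {\<bar>P b - P r\<bar> | b r. b \<in> B \<and> r \<in> R}"
    define d where "d = Min S"
    define T where "T = {(b, r). b \<in> B \<and> r \<in> R \<and> \<bar>P b - P r\<bar> = d}"
    have Seq: "S = (\<lambda>(b,r). \<bar>P b - P r\<bar>) ` (B \<times> R)" by (auto simp: S_def)
    have finS: "finite S" using Seq finB finR by simp
    have neS: "S \<noteq> {}" using Seq False by auto
    have dS: "d \<in> S" using finS neS by (simp add: d_def)
    then obtain b0 r0 where b0: "b0 \<in> B" and r0: "r0 \<in> R" and d0: "d = \<bar>P b0 - P r0\<bar>"
      by (auto simp: S_def)
    have dle: "d \<le> \<bar>P b - P r\<bar>" if "b \<in> B" "r \<in> R" for b r
      using finS that by (auto simp: d_def S_def intro!: Min_le)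
    have finT: "finite T" by (rule finite_subset[of _ "B \<times> R"]) (auto simp: T_def finB finR)
    have T0: "(b0, r0) \<in> T" using b0 r0 d0 by (simp add: T_def)
    have cT: "0 < card T" using finT T0 card_gt_0_iff by blast
    have geq: "greedy_exp P (Suc k) B R =
       (\<Sum>(b, r)\<in>T. d + greedy_exp P k (B - {b}) (R - {r})) / real (card T)"
      using False by (simp add: Let_def d_def T_def S_def)
    define X where "X = real m * harm (card B - 1)"
    have step: "d + greedy_exp P k (B - {b}) (R - {r}) \<le> d + X" if "(b, r) \<in> T" for b r
    proof -
      have br: "b \<in> B" "r \<in> R" "\<bar>P b - P r\<bar> = d" using that by (auto simp: T_def)
      have "Inv m (B - {b}) (R - {r})"
      proof (rule preserve[OF I br(1,2)])
        fix b' r' assume "b' \<in> B" "r' \<in> R"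
        then show "\<bar>real b - real r\<bar> \<le> \<bar>real b' - real r'\<bar>"
          using dle[of b' r'] Pd br by auto
      qed
      from Suc.IH[OF this] show ?thesis using br finB by (simp add: X_def)
    qed
    have "(\<Sum>(b, r)\<in>T. d + greedy_exp P k (B - {b}) (R - {r})) \<le> (\<Sum>(b, r)\<in>T. d + X)"
      using step by (intro sum_mono) auto
    also have "\<dots> = real (card T) * (d + X)" by simp
    finally have g1: "greedy_exp P (Suc k) B R \<le> d + X" using cT geq
      by (simp add: divide_le_eq mult.commute)
    define dd where "dd = nat \<bar>int b0 - int r0\<bar>"
    have ddd: "real dd = d" using d0 Pd[OF b0 r0] by (simp add: dd_def)
    have "card B * dd \<le> m"
      by (rule card_bound[OF I]) (metis Pd dle ddd)
    then have "real (card B) * d \<le> real m" using ddd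
      by (metis of_nat_le_iff of_nat_mult)
    moreover have cB: "0 < card B" using False finB card_gt_0_iff by blast
    ultimately have dm: "d \<le> real m / real (card B)" by (simp add: field_simps)
    obtain j where j: "card B = Suc j" using cB not0_implies_Suc by blast
    have "d + X \<le> real m * harm (card B)"
      using dm j by (simp add: X_def harm_Suc distrib_left divide_inverse)
    then show ?thesis using g1 by simp
  qed
qed


lemma init_cc:
  shows "cc {i \<in> {1..Suc (2*m)}. even i} {i \<in> {1..Suc (2*m)}. odd i} t = (if t \<le> 2*m+1 then int (t mod 2) else 1)"
proof (induction t)
  case 0
  then show ?case by (simp add: cc_def ff_def )
next
  case (Suc t)
  then show ?case by (auto simp: cc_Suc ff_def  mod_Suc)
qed

lemma init_inv: "Inv m {i \<in> {1..Suc (2*m)}. even i} {i \<in> {1..Suc (2*m)}. odd i}"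
  unfolding Inv_def using init_cc[of m] by auto

lemma card_even: "card {i \<in> {1..Suc (2*m)}. even i} = m"
proof -
  have "{i \<in> {1..Suc (2*m)}. even i} = (\<lambda>k. 2*k) ` {1..m}"
    by (auto elim!: evenE)
  moreover have "inj_on (\<lambda>k::nat. 2*k) {1..m}" by (auto simp: inj_on_def)
  ultimately show ?thesis by (simp add: card_image)
qed

lemma pos1: "1 \<le> i \<Longrightarrow> pos (\<lambda>_. 1) i = real i - 1"
  by (simp add: pos_def of_nat_diff)

lemma harm_bound: "1 \<le> m \<Longrightarrow> harm m \<le> 1 + ln (real m)"
proof -
  assume "1 \<le> m"
  then obtain j where j: "m = Suc j" using not0_implies_Suc by fastforce
  have "harm (Suc j) - ln (real (Suc j)) \<le> harm (Suc 0) - ln (real (Suc 0))"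
    using decseq_harm_diff_ln unfolding decseq_def by (metis zero_le)
  moreover have "harm (Suc 0) = (1::real)" by (simp add: harm_def)
  ultimately show ?thesis using j by simp
qed

theorem lemmaA15:
  fixes m :: nat
  assumes "m > 0"
  shows "Ecost (2 * m) (\<lambda>_. 1) \<le> real m * (1 + ln (real m))"
proof -
  have D: "Dcost (2*m) (\<lambda>_. 1) \<le> real m * harm m"
    unfolding Dcost_def using main[OF pos1 init_inv, where m=m and k="Suc (2*m)"] card_even[of m]
    by (simp only:)
  have "Ecost (2 * m) (\<lambda>_. 1) = Dcost (2*m) (\<lambda>_. 1)"
    unfolding Ecost_def by (simp add: comp_def card_permutations)
  also have "\<dots> \<le> real m * harm m" by (rule D)
  also have "\<dots> \<le> real m * (1 + ln (real m))"
    using harm_bound[of m] assms by (intro mult_left_mono) auto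
  finally show ?thesis .
qed

end
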